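(* Let $n_\Gamma \le n$ be positive integers, let $H$ be a real symmetric $n\times n$ matrix, and let $R$ be a real $n_\Gamma\times n$ matrix with $RR^T = I_{n_\Gamma}$ (so that $R^TR$ is an orthogonal projection on $\mathbb{R}^n$). For $s_0>0$ define $$\widetilde{Y}(s_0) = R\,(s_0 I_n + iH)^{-1}R^T .$$ Then $\widetilde{Y}(s_0)$ is invertible, and the $n_\Gamma\times n_\Gamma$ matrix $$\bar{H}_{\Gamma,\Gamma} = (-i)\big(\widetilde{Y}(s_0)^{-1} - s_0 I_{n_\Gamma}\big)$$ is (complex) symmetric and its imaginary part $\operatorname{Im}\bar{H}_{\Gamma,\Gamma}$ (taken entrywise) is negative semidefinite; equivalently $\operatorname{Im}\bar{H}_{\Gamma,\Gamma} = -\operatorname{Re}\big(\widetilde{Y}(s_0)^{-1}-s_0 I_{n_\Gamma}\big)\le 0$.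
   Context: Here $H$ plays the role of the (discretized) Hamiltonian $H_{\mathrm{II},\mathrm{II}}$ restricted to an exterior region, $R$ is the restriction operator from the exterior region to a boundary layer $\Gamma$, and $\widetilde{Y}(s)$ is the Laplace transform of $Y(t)=Re^{-iHt}R^T$. The matrix $\bar H_{\Gamma,\Gamma}$ is the effective boundary Hamiltonian of the absorbing boundary condition $i\partial_t\delta\rho_{\Gamma,\Gamma} = [\bar H_{\Gamma,\Gamma},\delta\rho_{\Gamma,\Gamma}] + (\text{source terms})$, chosen so that $Z(t)=e^{-i\bar H_{\Gamma,\Gamma}t}$ satisfies $\widetilde Z(s_0)=\widetilde Y(s_0)$. For a complex matrix $M$, $\operatorname{Re}M$ and $\operatorname{Im}M$ denote the entrywise real and imaginary parts; "$\le 0$" means negative semidefinite. *)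

theory Defs
  imports "HOL-Analysis.Analysis"
begin

definition neg_semidef :: "real^'k^'k \<Rightarrow> bool" where
  "neg_semidef M \<longleftrightarrow> (\<forall>x::real^'k. x \<bullet> (M *v x) \<le> 0)"

end

theory Submission imports Defs begin

definition hf :: "complex^'n \<Rightarrow> complex^'n \<Rightarrow> complex" where
  "hf v w = (\<Sum>i\<in>UNIV. cnj (v$i) * w$i)"

definition cT :: "complex^'a^'b \<Rightarrow> complex^'b^'a" where
  "cT M = map_matrix cnj (transpose M)"

lemma hf_mv: "hf v (M *v w) = hf (cT M *v v) w"
proof -
  have "hf v (M *v w) = (\<Sum>i\<in>UNIV. \<Sum>j\<in>UNIV. cnj (v$i) * (M$i$j * w$j))"
    unfolding hf_def matrix_vector_mult_def by (simp add: sum_distrib_left)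
  also have "\<dots> = (\<Sum>j\<in>UNIV. \<Sum>i\<in>UNIV. cnj (v$i) * (M$i$j * w$j))"
    by (rule sum.swap)
  also have "\<dots> = hf (cT M *v v) w"
    unfolding hf_def matrix_vector_mult_def cT_def
    by (simp add: sum_distrib_right sum_distrib_left cnj_sum transpose_def mult_ac)
  finally show ?thesis .
qed

lemma hf_cnj: "cnj (hf v w) = hf w v"
  unfolding hf_def by (simp add: cnj_sum mult.commute)

lemma hf_add_right: "hf v (a + b) = hf v a + hf v b"
  unfolding hf_def by (simp add: distrib_left sum.distrib)
lemma hf_diff_right: "hf v (a - b) = hf v a - hf v b"
  unfolding hf_def by (simp add: right_diff_distrib sum_subtractf)
lemma hf_diff_left: "hf (a - b) v = hf a v - hf b v"
  unfolding hf_def by (simp add: left_diff_distrib sum_subtractf)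
lemma hf_scale_right: "hf v (c *s a) = c * hf v a"
  unfolding hf_def by (simp add: sum_distrib_left mult_ac)

lemma cnj_self: "cnj z * z = complex_of_real ((cmod z)^2)"
  by (simp add: complex_eq_iff cmod_power2) (simp add: power2_eq_square)

lemma hf_self: "hf v v = of_real (\<Sum>i\<in>UNIV. (cmod (v$i))^2)"
  unfolding hf_def of_real_sum by (simp add: cnj_self)

lemma matc: "mat (c::complex) *v (z::complex^'n) = c *s z"
proof -
  have "(\<Sum>j\<in>UNIV. mat c $ i $ j * z $ j) = c * z $ i" for i
  proof -
    have "(\<Sum>j\<in>UNIV. mat c $ i $ j * z $ j) = (\<Sum>j\<in>UNIV. if i = j then c * z $ j else 0)"
      by (rule sum.cong) (auto simp: mat_def)
    thus ?thesis by simp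
  qed
  thus ?thesis by (simp add: vec_eq_iff matrix_vector_mult_def)
qed

lemma mapi: "map_matrix (\<lambda>x. \<i> * complex_of_real x) H *v (z::complex^'n) = \<i> *s (map_matrix complex_of_real H *v z)"
  by (simp add: vec_eq_iff matrix_vector_mult_def sum_distrib_left mult_ac)

lemma hf_self_ge: "Re (hf v v) \<ge> 0"
  by (simp add: hf_self sum_nonneg)

lemma hf_self_zero: "Re (hf v v) = 0 \<Longrightarrow> v = 0"
  by (simp add: hf_self sum_nonneg_eq_0_iff vec_eq_iff)

lemma cT_real: "cT (map_matrix complex_of_real M) = map_matrix complex_of_real (transpose M)"
  by (simp add: cT_def vec_eq_iff transpose_def)

lemma map_real_mul: "map_matrix complex_of_real (M ** N) = map_matrix complex_of_real M ** map_matrix complex_of_real N"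
  by (simp add: vec_eq_iff matrix_matrix_mult_def)

lemma map_real_transpose: "transpose (map_matrix complex_of_real M) = map_matrix complex_of_real (transpose M)"
  by (simp add: vec_eq_iff transpose_def)

lemma map_real_mat1: "map_matrix complex_of_real (mat 1) = mat 1"
  by (simp add: vec_eq_iff mat_def)

lemma inner_Re: "(x::real^'n) \<bullet> (map_matrix Re M *v x) = Re (hf (\<chi> i. complex_of_real (x$i)) (M *v (\<chi> i. complex_of_real (x$i))))"
  unfolding hf_def by (simp add: inner_vec_def matrix_vector_mult_def sum_distrib_left Re_sum mult_ac)

lemma hf_realvec: "hf (\<chi> i. complex_of_real ((x::real^'n)$i)) (\<chi> i. complex_of_real (x$i)) = of_real (x \<bullet> x)"
  unfolding hf_def by (simp add: inner_vec_def)

lemma inv_props: "invertible (A::'a::field^'n^'n) \<Longrightarrow> A ** matrix_inv A = mat 1 \<and> matrix_inv A ** A = mat 1"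
  unfolding invertible_def matrix_inv_def by (rule someI_ex)

lemma inv_sym: assumes "invertible (A::'a::field^'n^'n)" "transpose A = A"
  shows "transpose (matrix_inv A) = matrix_inv A"
proof -
  have "transpose (matrix_inv A) ** A = mat 1"
    using inv_props[OF assms(1)] assms(2) by (metis matrix_transpose_mul transpose_mat)
  hence "transpose (matrix_inv A) ** A ** matrix_inv A = matrix_inv A" by simp
  thus ?thesis using inv_props[OF assms(1)] by (simp add: matrix_mul_assoc[symmetric])
qed

lemma proj_le: assumes "R ** transpose R = mat 1" "Rc = map_matrix complex_of_real R"
  shows "Re (hf (Rc *v z) (Rc *v z)) \<le> Re (hf z z)"
proof -
  have RR: "Rc ** transpose Rc = mat 1"
    by (simp add: assms(2) map_real_transpose map_real_mul[symmetric] assms(1) map_real_mat1)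
  define y where "y = Rc *v z"
  define q where "q = z - transpose Rc *v y"
  have c1: "cT (transpose Rc) = Rc" by (simp add: assms(2) cT_def vec_eq_iff transpose_def)
  have a: "hf z (transpose Rc *v y) = hf y y" by (simp only: hf_mv c1 y_def)
  have b: "hf (transpose Rc *v y) z = hf y y" by (metis a hf_cnj hf_self complex_cnj_complex_of_real)
  have c: "hf (transpose Rc *v y) (transpose Rc *v y) = hf y y"
    by (simp only: hf_mv c1 matrix_vector_mul_assoc RR matrix_vector_mul_lid)
  have "hf q q = hf z z - hf y y"
    unfolding q_def by (simp only: hf_diff_left hf_diff_right a b c) simp
  thus ?thesis using hf_self_ge[of q] y_def by simp
qed

theorem mainTheorem1:
  fixes H :: "real^'n^'n" and R :: "real^'n^'g" and s0 :: real
  assumes "CARD('g) \<le> CARD('n)"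
    and "transpose H = H"
    and "R ** transpose R = mat 1"
    and "s0 > 0"
  defines "Rc \<equiv> map_matrix complex_of_real R"
    and "A \<equiv> mat (complex_of_real s0) + map_matrix (\<lambda>x. \<i> * complex_of_real x) H"
  defines "Y \<equiv> Rc ** matrix_inv A ** transpose Rc"
  defines "Hbar \<equiv> map_matrix (\<lambda>z. - \<i> * z) (matrix_inv Y - mat (complex_of_real s0))"
  shows "invertible A \<and> invertible Y \<and> transpose Hbar = Hbar
         \<and> neg_semidef (map_matrix Im Hbar)
         \<and> map_matrix Im Hbar = - map_matrix Re (matrix_inv Y - mat (complex_of_real s0))"
proof -
  have HT: "H$j$i = H$i$j" for i j
  proof -
    have "H$j$i = transpose H $i$j" by (simp add: transpose_def)
    thus ?thesis using assms(2) by simp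
  qed
  define Hc where "Hc = map_matrix complex_of_real H"
  have Aeq: "A *v z = complex_of_real s0 *s z + \<i> *s (Hc *v z)" for z
    by (simp add: A_def Hc_def matrix_vector_mult_add_rdistrib matc mapi)
  have cTH: "cT Hc = Hc" using assms(2) by (simp add: Hc_def cT_real)
  have realpart: "Re (hf z (A *v z)) = s0 * Re (hf z z)" for z
  proof -
    have "hf z (Hc *v z) = cnj (hf z (Hc *v z))" by (metis hf_mv cTH hf_cnj)
    hence "Im (hf z (Hc *v z)) = Im (cnj (hf z (Hc *v z)))" by (rule arg_cong)
    hence "Im (hf z (Hc *v z)) = 0" by simp
    thus ?thesis by (simp add: Aeq hf_add_right hf_scale_right)
  qed
  have hf0: "hf z 0 = 0" for z :: "complex^'n" by (simp add: hf_def)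
  have hf0g: "hf z 0 = 0" for z :: "complex^'g" by (simp add: hf_def)
  have Ainj: "z = 0" if "A *v z = 0" for z
  proof -
    have "s0 * Re (hf z z) = 0" using realpart[of z] that hf0 by simp
    hence "Re (hf z z) = 0" using assms(4) by simp
    thus ?thesis by (rule hf_self_zero)
  qed
  have invA: "invertible A" using matrix_left_invertible_ker invertible_left_inverse Ainj by blast
  define Ai where "Ai = matrix_inv A"
  have AT: "transpose A = A"
    by (simp add: A_def vec_eq_iff transpose_def mat_def HT)
  have AiT: "transpose Ai = Ai" using inv_sym invA AT Ai_def by blast
  have AAi: "A ** Ai = mat 1" "Ai ** A = mat 1" using inv_props[OF invA] Ai_def by auto
  have cTRc: "cT Rc = transpose Rc" by (simp add: Rc_def cT_real map_real_transpose)
  have RRc: "Rc ** transpose Rc = mat 1"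
    by (simp add: Rc_def map_real_transpose map_real_mul[symmetric] assms(3) map_real_mat1)
  define zz where "zz w = Ai *v (transpose Rc *v w)" for w
  have Yw: "Y *v w = Rc *v zz w" for w unfolding Y_def zz_def Ai_def by (simp only: matrix_vector_mul_assoc matrix_mul_assoc)
  have uw: "transpose Rc *v w = A *v zz w" for w by (simp add: zz_def matrix_vector_mul_assoc AAi)
  have key: "Re (hf w (Y *v w)) = s0 * Re (hf (zz w) (zz w))" for w
  proof -
    have "hf w (Y *v w) = hf (A *v zz w) (zz w)" by (simp only: Yw hf_mv cTRc uw)
    also have "\<dots> = cnj (hf (zz w) (A *v zz w))" by (simp add: hf_cnj)
    finally have "Re (hf w (Y *v w)) = Re (hf (zz w) (A *v zz w))" by simp
    thus ?thesis using realpart by simp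
  qed
  have Yinj: "w = 0" if "Y *v w = 0" for w
  proof -
    have "s0 * Re (hf (zz w) (zz w)) = 0" using key[of w] that hf0g by simp
    hence "Re (hf (zz w) (zz w)) = 0" using assms(4) by simp
    hence "zz w = 0" by (rule hf_self_zero)
    hence "transpose Rc *v w = 0" using uw by simp
    hence "Rc *v (transpose Rc *v w) = 0" by simp
    thus ?thesis by (metis matrix_vector_mul_assoc RRc matrix_vector_mul_lid)
  qed
  have invY: "invertible Y" using matrix_left_invertible_ker invertible_left_inverse Yinj by blast
  define Yi where "Yi = matrix_inv Y"
  have YT: "transpose Y = Y" by (simp add: Y_def matrix_transpose_mul AiT[unfolded Ai_def] matrix_mul_assoc)
  have YiT: "transpose Yi = Yi" using inv_sym invY YT Yi_def by blast
  have YiTe: "Yi$j$i = Yi$i$j" for i j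
  proof -
    have "Yi$j$i = transpose Yi $i$j" by (simp add: transpose_def)
    thus ?thesis using YiT by simp
  qed
  have YYi: "Y ** Yi = mat 1" using inv_props[OF invY] Yi_def by auto
  have c1: "transpose Hbar = Hbar"
    by (simp add: Hbar_def vec_eq_iff transpose_def mat_def YiTe Yi_def[symmetric])
  have c3: "map_matrix Im Hbar = - map_matrix Re (matrix_inv Y - mat (complex_of_real s0))"
    by (simp add: Hbar_def vec_eq_iff)
  have mdiff: "(Yi - mat c) *v v = Yi *v v - c *s v" for c v
    by (simp add: matrix_vector_mult_diff_rdistrib matc)
  have mneg: "(- B) *v x = - (B *v x)" for B :: "real^'g^'g" and x
    by (simp add: vec_eq_iff matrix_vector_mult_def sum_negf)
  have c2: "neg_semidef (map_matrix Im Hbar)"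
    unfolding neg_semidef_def
  proof
    fix x :: "real^'g"
    define xc where "xc = (\<chi> i. complex_of_real (x$i))"
    define w where "w = Yi *v xc"
    have Ywx: "Y *v w = xc" by (simp add: w_def matrix_vector_mul_assoc YYi)
    have "hf xc w = cnj (hf w (Y *v w))" by (simp add: Ywx hf_cnj)
    hence "Re (hf xc w) = s0 * Re (hf (zz w) (zz w))" using key[of w] by simp
    also have "\<dots> \<ge> s0 * Re (hf (Rc *v zz w) (Rc *v zz w))"
      using proj_le[OF assms(3) Rc_def[THEN meta_eq_to_obj_eq]] assms(4) by (simp add: mult_left_mono)
    also have "Rc *v zz w = xc" using Yw Ywx by simp
    finally have ge: "Re (hf xc w) \<ge> s0 * Re (hf xc xc)" .
    have "x \<bullet> (map_matrix Im Hbar *v x) = - (x \<bullet> (map_matrix Re (Yi - mat (complex_of_real s0)) *v x))"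
      by (simp add: c3[folded Yi_def] mneg)
    also have "\<dots> = - Re (hf xc ((Yi - mat (complex_of_real s0)) *v xc))"
      by (simp add: inner_Re xc_def)
    also have "\<dots> = - (Re (hf xc w) - s0 * Re (hf xc xc))"
      by (simp add: mdiff hf_diff_right hf_scale_right w_def)
    also have "\<dots> \<le> 0" using ge by simp
    finally show "x \<bullet> (map_matrix Im Hbar *v x) \<le> 0" .
  qed
  show ?thesis using invA invY c1 c2 c3 Yi_def by simp
qed

end
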